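(* For all integers $m\ge2$, $G_{m,m-1}(q)=2G_{m,m-2}(q)$ and $H_{m,m-1}(q)=2H_{m,m-2}(q)$.
   Context: $q$ is an indeterminate with square root $q^{1/2}$, $[k]=\frac{1-q^k}{1-q}$. Let $T_{m,n}(q)=\sum_{k=1}^n(-1)^{n-k}[k]^mq^{\frac m2(n-k)}$. The polynomials $G_{m,j},H_{m,j}\in\mathbb{Z}[q]$ ($m\ge1$, $0\le j\le m-1$) are those (shown to exist by Guo and Zeng, and uniquely determined) such that for all $n\ge1$: $T_{2m,n}(q)=\sum_{k=1}^m(-q^n)^{m-k}\frac{G_{m,m-k}(q)}{\prod_{i=0}^{m-k}(1+q^{m-i})}([n][n+1])^k$, and $T_{2m-1,n}(q)=(-1)^{m+n}H_{m,m-1}(q^{\frac12})\frac{q^{(m-\frac12)n}}{(1+q^{\frac12})^m\prod_{i=0}^{m-1}(1+q^{m-i-\frac12})}+\frac{1-q^{n+\frac12}}{1-q^{\frac12}}\sum_{k=1}^m(-q^n)^{m-k}\frac{H_{m,m-k}(q^{\frac12})([n][n+1])^{k-1}}{(1+q^{\frac12})^{m-k+1}\prod_{i=0}^{m-k}(1+q^{m-i-\frac12})}$. *)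

theory Defs
  imports "HOL-Computational_Algebra.Polynomial" "HOL-Computational_Algebra.Fraction_Field"
begin

text \<open>We work in the field of fractions of Z[s], where s plays the role of q^(1/2),
  so q = s^2.  All identities of the paper are identities of rational functions in q^(1/2).\<close>

type_synonym rf = "int poly fract"

definition qh :: rf where "qh = Fract [:0, 1:] 1"

definition qq :: rf where "qq = qh ^ 2"

definition qint :: "nat \<Rightarrow> rf" where
  "qint k = (1 - qq ^ k) / (1 - qq)"

definition evp :: "int poly \<Rightarrow> rf \<Rightarrow> rf" where
  "evp p x = poly (map_poly of_int p) x"

text \<open>T_{m,n}(q), with q^{m(n-k)/2} = (q^(1/2))^{m(n-k)}.\<close>
definition T :: "nat \<Rightarrow> nat \<Rightarrow> rf" where
  "T m n = (\<Sum>k=1..n. (-1) ^ (n - k) * qint k ^ m * qh ^ (m * (n - k)))"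

text \<open>The defining identity for the family G_{m,0},...,G_{m,m-1} (G j = G_{m,j}).\<close>
definition is_GZ_G :: "nat \<Rightarrow> (nat \<Rightarrow> int poly) \<Rightarrow> bool" where
  "is_GZ_G m G \<longleftrightarrow> (\<forall>n\<ge>1.
     T (2 * m) n =
       (\<Sum>k=1..m. (- (qq ^ n)) ^ (m - k) * evp (G (m - k)) qq
          / (\<Prod>i=0..m-k. 1 + qq ^ (m - i)) * (qint n * qint (n + 1)) ^ k))"

text \<open>The defining identity for the family H_{m,0},...,H_{m,m-1} (H j = H_{m,j}).
  Here q^{(m-1/2)n} = s^{(2m-1)n}, q^{m-i-1/2} = s^{2(m-i)-1}, q^{n+1/2} = s^{2n+1}.\<close>
definition is_GZ_H :: "nat \<Rightarrow> (nat \<Rightarrow> int poly) \<Rightarrow> bool" where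
  "is_GZ_H m H \<longleftrightarrow> (\<forall>n\<ge>1.
     T (2 * m - 1) n =
       (-1) ^ (m + n) * evp (H (m - 1)) qh * qh ^ ((2 * m - 1) * n)
         / ((1 + qh) ^ m * (\<Prod>i=0..m-1. 1 + qh ^ (2 * (m - i) - 1)))
       + (1 - qh ^ (2 * n + 1)) / (1 - qh) *
         (\<Sum>k=1..m. (- (qq ^ n)) ^ (m - k) * evp (H (m - k)) qh
            * (qint n * qint (n + 1)) ^ (k - 1)
            / ((1 + qh) ^ (m - k + 1) * (\<Prod>i=0..m-k. 1 + qh ^ (2 * (m - i) - 1)))))"

end

theory Submission
  imports Defs
begin


lemma qh_pow: "qh ^ k = Fract ([:0,1:] ^ k) 1"
  by (induction k) (simp_all add: qh_def One_fract_def)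

lemma Fract1_eq: "Fract (a::int poly) 1 = Fract b 1 \<longleftrightarrow> a = b"
  by (simp add: eq_fract)

lemma Fract1_nz: "Fract (a::int poly) 1 \<noteq> 0 \<longleftrightarrow> a \<noteq> 0"
  by (simp add: eq_fract Zero_fract_def)

lemma one_plus_qh_nz: "1 + qh ^ k \<noteq> 0"
proof -
  have "1 + qh ^ k = Fract (1 + [:0,1:] ^ k) 1" by (simp add: qh_pow One_fract_def)
  moreover have "poly (1 + [:0,1:] ^ k :: int poly) 0 \<noteq> 0"
    by (cases k) simp_all
  hence "(1 + [:0,1:] ^ k :: int poly) \<noteq> 0" by (metis poly_0)
  ultimately show ?thesis by (simp add: Fract1_nz)
qed

lemma one_minus_qh_nz: "k \<ge> 1 \<Longrightarrow> 1 - qh ^ k \<noteq> 0"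
proof -
  assume k: "k \<ge> 1"
  have "1 - qh ^ k = Fract (1 - [:0,1:] ^ k) 1" by (simp add: qh_pow One_fract_def)
  moreover have "poly (1 - [:0,1:] ^ k :: int poly) 0 \<noteq> 0"
    using k by (cases k) simp_all
  hence "(1 - [:0,1:] ^ k :: int poly) \<noteq> 0" by (metis poly_0)
  ultimately show ?thesis by (simp add: Fract1_nz)
qed

lemma qh_nz: "qh \<noteq> 0"
  by (simp add: qh_def Fract1_nz)

lemma qq_nz: "qq \<noteq> 0"
  by (simp add: qq_def qh_nz)

lemma qh_pow_inj: "qh ^ a = qh ^ b \<Longrightarrow> a = b"
proof -
  assume "qh ^ a = qh ^ b"
  hence "([:0,1:] ^ a :: int poly) = [:0,1:] ^ b" by (simp add: qh_pow Fract1_eq)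
  hence "degree ([:0,1:] ^ a :: int poly) = degree ([:0,1:] ^ b :: int poly)" by simp
  thus "a = b" by (simp add: degree_power_eq)
qed

lemma of_int_rf: "(of_int a :: rf) = Fract [:a:] 1"
proof (cases a rule: int_cases2)
  case (nonneg n)
  then show ?thesis by (simp add: of_nat_fract of_nat_poly)
next
  case (nonpos n)
  have "(of_int a :: rf) = - Fract (of_nat n) 1" using nonpos by (simp add: of_nat_fract)
  also have "\<dots> = Fract (- of_nat n) 1" by simp
  finally show ?thesis using nonpos by (simp add: of_nat_poly)
qed

lemma evp_Fract: "evp p (Fract r 1) = Fract (pcompose p r) 1"
proof (induction p rule: pCons_induct)
  case 0
  then show ?case by (simp add: evp_def Zero_fract_def)
next
  case (pCons a p)
  have "evp (pCons a p) (Fract r 1) = of_int a + Fract r 1 * evp p (Fract r 1)"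
    by (simp add: evp_def map_poly_pCons)
  also have "\<dots> = Fract (pcompose (pCons a p) r) 1"
    using pCons.IH by (simp add: of_int_rf pcompose_pCons)
  finally show ?case .
qed

lemma qq_Fract: "qq = Fract [:0,0,1:] 1"
  by (simp add: qq_def qh_def power2_eq_square)

lemma evp_qh: "evp p qh = Fract p 1"
  by (simp add: qh_def evp_Fract)

lemma evp_qq_inj: "evp p qq = evp r qq \<Longrightarrow> p = r"
proof -
  assume "evp p qq = evp r qq"
  hence "pcompose p [:0,0,1:] = pcompose r [:0,0,1:]" by (simp add: qq_Fract evp_Fract Fract1_eq)
  hence "pcompose (p - r) [:0,0,1:] = 0" by (simp add: pcompose_diff)
  hence "p - r = 0" by (rule pcompose_eq_0) simp
  thus ?thesis by simp
qed

lemma evp_qq_2: "evp a qq = 2 * evp b qq \<Longrightarrow> a = 2 * b"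
proof -
  assume h: "evp a qq = 2 * evp b qq"
  have two: "(2::rf) = Fract [:2:] 1" using of_nat_fract[of 2, where ?'a="int poly"] by (simp add: numeral_poly)
  have "evp (2 * b) qq = Fract [:2:] 1 * evp b qq"
    by (simp add: qq_Fract evp_Fract pcompose_mult numeral_poly pcompose_smult)
  hence "evp a qq = evp (2 * b) qq" using h two by simp
  thus ?thesis by (rule evp_qq_inj)
qed

lemma evp_qh_2: "evp a qh = 2 * evp b qh \<Longrightarrow> a = 2 * b"
proof -
  assume h: "evp a qh = 2 * evp b qh"
  have two: "(2::rf) = Fract [:2:] 1" using of_nat_fract[of 2, where ?'a="int poly"] by (simp add: numeral_poly)
  have "Fract a 1 = Fract ([:2:] * b) 1" using h unfolding evp_qh two by simp
  thus ?thesis by (simp add: Fract1_eq numeral_poly)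
qed

lemma roots_zero:
  fixes p :: "rf poly"
  assumes "\<And>n. n \<ge> 2 \<Longrightarrow> poly p (qq ^ n) = 0"
  shows "p = 0"
proof (rule ccontr)
  assume "p \<noteq> 0"
  hence fin: "finite {x. poly p x = 0}" by (rule poly_roots_finite)
  have "(\<lambda>n. qq ^ n) ` {2..} \<subseteq> {x. poly p x = 0}" using assms by auto
  moreover have "inj_on (\<lambda>n. qq ^ n) {2..}"
    by (auto intro!: inj_onI simp: qq_def power_mult[symmetric] dest!: qh_pow_inj)
  hence "infinite ((\<lambda>n. qq ^ n) ` {2..})"
    using finite_imageD infinite_Ici by blast
  ultimately show False using fin finite_subset by blast
qed

lemma poly_ext:
  fixes p r :: "rf poly"
  assumes "\<And>y. poly p y = poly r y"
  shows "p = r"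
proof -
  have "p - r = 0" by (rule roots_zero) (simp add: assms)
  thus ?thesis by simp
qed

lemma T_rec: "T k (Suc n) + qh ^ k * T k n = qint (Suc n) ^ k"
proof -
  have "T k (Suc n) = qint (Suc n) ^ k + (\<Sum>i=1..n. (-1) ^ (Suc n - i) * qint i ^ k * qh ^ (k * (Suc n - i)))"
    unfolding T_def by (simp add: add.commute)
  also have "(\<Sum>i=1..n. (-1) ^ (Suc n - i) * qint i ^ k * qh ^ (k * (Suc n - i))) = - (qh ^ k * T k n)"
    unfolding T_def sum_distrib_left sum_negf[symmetric]
    by (rule sum.cong) (auto simp: Suc_diff_le power_add mult_ac)
  finally show ?thesis by simp
qed



lemma qq_ne1: "1 - qq \<noteq> 0"
  using one_minus_qh_nz[of 2] by (simp add: qq_def)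

lemma qint_eq: "qint n = (1 - qq ^ n) / (1 - qq)"
  by (simp add: qint_def)

lemma even_case:
  assumes GZ: "is_GZ_G m G" and m2: "m \<ge> 2"
  shows "evp (G (m - 1)) qq = 2 * evp (G (m - 2)) qq"
proof -
  obtain j where mj: "m = j + 2" using m2 by (metis add.commute le_Suc_ex)
  define A where "A = 1 / (1 - qq)"
  define c where "c k = evp (G (m - k)) qq / (\<Prod>i=0..m-k. 1 + qq ^ (m - i))" for k
  define D :: "rf poly" where "D = [:1, -1:]"
  define X where "X = smult (A^2) (D * [:1, -qq:])"
  define Xq where "Xq = smult (A^2) ([:1, -1/qq:] * D)"
  define F where "F = (\<Sum>k=1..m. smult (c k) ([:0,-1:] ^ (m - k) * X ^ k))"
  define Fq where "Fq = (\<Sum>k=1..m. smult (c k) ([:0,-1/qq:] ^ (m - k) * Xq ^ k))"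
  have qn: "qq \<noteq> 0" "1 - qq \<noteq> 0" by (rule qq_nz, rule qq_ne1)
  have pX: "poly X y = A^2 * ((1 - y) * (1 - qq * y))" for y
    by (simp add: X_def D_def algebra_simps)
  have pXq: "poly Xq y = A^2 * ((1 - y / qq) * (1 - y))" for y
    by (simp add: Xq_def D_def algebra_simps add_divide_distrib[symmetric])
  have qX: "qint n * qint (Suc n) = poly X (qq ^ n)" for n
    by (simp add: pX qint_eq A_def power2_eq_square)
  have TF: "T (2 * m) n = poly F (qq ^ n)" if "n \<ge> 1" for n
  proof -
    have "T (2 * m) n = (\<Sum>k=1..m. (- (qq ^ n)) ^ (m - k) * evp (G (m - k)) qq
          / (\<Prod>i=0..m-k. 1 + qq ^ (m - i)) * (qint n * qint (n + 1)) ^ k)"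
      using GZ that unfolding is_GZ_G_def by blast
    also have "\<dots> = poly F (qq ^ n)"
      unfolding F_def poly_sum
      by (rule sum.cong) (simp_all add: c_def qX)
    finally show ?thesis .
  qed
  have FqF: "poly Fq y = poly F (y / qq)" for y
    unfolding F_def Fq_def poly_sum
    by (rule sum.cong) (simp_all add: pX pXq qn)
  have P0: "F + smult (qq ^ m) Fq - smult (A ^ (2 * m)) (D ^ (2 * m)) = 0"
  proof (rule roots_zero)
    fix n :: nat assume n2: "n \<ge> 2"
    then obtain n' where nn: "n = Suc n'" and n1: "n' \<ge> 1" by (metis Suc_le_D Suc_le_mono one_add_one plus_1_eq_Suc)
    have rec: "T (2 * m) n + qq ^ m * T (2 * m) n' = qint n ^ (2 * m)"
      using T_rec[of "2 * m" n'] nn by (simp add: qq_def power_mult)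
    have "poly Fq (qq ^ n) = T (2 * m) n'"
      using FqF TF[OF n1] nn qn by simp
    moreover have "poly F (qq ^ n) = T (2 * m) n" using TF n2 by simp
    moreover have "qint n ^ (2 * m) = A ^ (2 * m) * (1 - qq ^ n) ^ (2 * m)"
      by (simp add: qint_eq A_def power_divide)
    ultimately show "poly (F + smult (qq ^ m) Fq - smult (A ^ (2 * m)) (D ^ (2 * m))) (qq ^ n) = 0"
      using rec by (simp add: D_def)
  qed
  have E: "F + smult (qq ^ m) Fq = smult (A ^ (2 * m)) (D ^ (2 * m))"
    using P0 by simp
  define F12 where "F12 = smult (c 1) ([:0,-1:] ^ (m - 1) * X) + smult (c 2) ([:0,-1:] ^ (m - 2) * X ^ 2)"
  define F3 where "F3 = (\<Sum>k=3..m. smult (c k) ([:0,-1:] ^ (m - k) * X ^ k))"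
  define Fq12 where "Fq12 = smult (c 1) ([:0,-1/qq:] ^ (m - 1) * Xq) + smult (c 2) ([:0,-1/qq:] ^ (m - 2) * Xq ^ 2)"
  define Fq3 where "Fq3 = (\<Sum>k=3..m. smult (c k) ([:0,-1/qq:] ^ (m - k) * Xq ^ k))"
  have I: "{1..m} = insert 1 (insert 2 {3..m})" using m2 by auto
  have FS: "F = F12 + F3" unfolding F_def F12_def F3_def I by simp
  have FqS: "Fq = Fq12 + Fq3" unfolding Fq_def Fq12_def Fq3_def I by simp
  have DX: "D dvd X" "D dvd Xq" unfolding X_def Xq_def by (rule dvd_smult, simp del: mult_pCons_left mult_pCons_right)+
  have gen: "D ^ 3 dvd (\<Sum>k=3..m. smult (c k) (W ^ (m - k) * Y ^ k))" if DY: "D dvd Y" for W Y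
  proof (rule dvd_sum)
    fix k assume "k \<in> {3..m}"
    then obtain r where kr: "k = 3 + r" by (metis atLeastAtMost_iff le_Suc_ex)
    have "D ^ 3 dvd Y ^ k" using DY unfolding kr power_add by (simp add: dvd_power_same dvd_mult2)
    thus "D ^ 3 dvd smult (c k) (W ^ (m - k) * Y ^ k)" by (simp add: dvd_smult dvd_mult)
  qed
  have DF3: "D ^ 3 dvd F3" "D ^ 3 dvd Fq3" unfolding F3_def Fq3_def using gen DX by blast+
  have DR: "D ^ 3 dvd smult (A ^ (2 * m)) (D ^ (2 * m))"
    using m2 by (simp add: dvd_smult le_imp_power_dvd)
  have D12: "D ^ 3 dvd F12 + smult (qq ^ m) Fq12"
  proof -
    have "F12 + smult (qq ^ m) Fq12 = smult (A ^ (2 * m)) (D ^ (2 * m)) - F3 - smult (qq ^ m) Fq3"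
      using E unfolding FS FqS by (simp add: smult_add_right algebra_simps)
    thus ?thesis using DR DF3 by (simp add: dvd_diff dvd_smult)
  qed
  define B where "B = smult ((-1) ^ m * A^2) (smult (- (c 1) * (1 + qq)) [:0,1:]
      + smult (c 2 * A^2) ([:1,-qq:]^2 + [:qq,-1:]^2))"
  have KE: "F12 + smult (qq ^ m) Fq12 = D ^ 2 * ([:0,1:] ^ j * B)"
  proof (rule poly_ext)
    fix y
    have p0: "qq ^ k * (- y / qq) ^ k = (- y) ^ k" for k
    proof -
      have "qq ^ k * (- y / qq) ^ k = (qq * (- y / qq)) ^ k" by (rule power_mult_distrib[symmetric])
      thus ?thesis using qn by simp
    qed
    have p1: "qq ^ (j + 2) * (- y / qq) ^ (j + 1) = qq * (- y) ^ (j + 1)"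
    proof -
      have "qq ^ (j + 2) = qq * qq ^ (j + 1)" by simp
      hence "qq ^ (j + 2) * (- y / qq) ^ (j + 1) = qq * (qq ^ (j + 1) * (- y / qq) ^ (j + 1))"
        by (simp only: mult.assoc)
      thus ?thesis by (simp only: p0)
    qed
    have p2: "qq ^ (j + 2) * (- y / qq) ^ j = qq^2 * (- y) ^ j"
    proof -
      have "qq ^ (j + 2) = qq^2 * qq ^ j" by (metis power_add mult.commute)
      hence "qq ^ (j + 2) * (- y / qq) ^ j = qq^2 * (qq ^ j * (- y / qq) ^ j)"
        by (simp only: mult.assoc)
      thus ?thesis by (simp only: p0)
    qed
    have p3: "(1 - y / qq) = (qq - y) / qq" using qn by (simp add: field_simps)
    have "poly (F12 + smult (qq ^ m) Fq12) y
      = c 1 * ((- y) ^ (j + 1) * poly X y) + c 2 * ((- y) ^ j * poly X y ^ 2)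
        + (c 1 * (qq ^ (j + 2) * (- y / qq) ^ (j + 1)) * poly Xq y
        + c 2 * (qq ^ (j + 2) * (- y / qq) ^ j) * poly Xq y ^ 2)"
      unfolding F12_def Fq12_def mj by (simp add: algebra_simps)
    also have "\<dots> = c 1 * ((- y) ^ (j + 1) * poly X y) + c 2 * ((- y) ^ j * poly X y ^ 2)
        + (c 1 * (qq * (- y) ^ (j + 1)) * poly Xq y
        + c 2 * (qq ^ 2 * (- y) ^ j) * poly Xq y ^ 2)"
      unfolding p1 p2 ..
    also have "\<dots> = (-y) ^ j * A^2 * (1 - y)^2 * (- c 1 * (1 + qq) * y
         + c 2 * A^2 * ((1 - qq * y)^2 + (qq - y)^2))"
      unfolding pX pXq p3 using qn
      by (simp add: field_simps power2_eq_square)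
    also have "\<dots> = poly (D ^ 2 * ([:0,1:] ^ j * B)) y"
      unfolding B_def D_def mj
      by (simp add: power_minus' algebra_simps power2_eq_square power_mult_distrib)
    finally show "poly (F12 + smult (qq ^ m) Fq12) y = poly (D ^ 2 * ([:0,1:] ^ j * B)) y" .
  qed
  have "D ^ 2 * D dvd D ^ 2 * ([:0,1:] ^ j * B)"
    using D12 unfolding KE by (simp add: power_Suc2 numeral_3_eq_3 power2_eq_square)
  moreover have "D ^ 2 \<noteq> 0" by (simp add: D_def)
  ultimately have "D dvd [:0,1:] ^ j * B" by (simp only: dvd_mult_cancel_left) simp
  then obtain r where "[:0,1:] ^ j * B = D * r" by (elim dvdE)
  hence "poly ([:0,1:] ^ j * B) 1 = poly (D * r) 1" by simp
  hence PB: "poly B 1 = 0" by (simp add: D_def)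
  have A1: "A^2 * (1 - qq)^2 = 1" using qn by (simp add: A_def power_divide)
  have "A \<noteq> 0" using qn by (simp add: A_def)
  have "poly B 1 = (-1) ^ m * A^2 * (- (c 1) * (1 + qq) + c 2 * (A^2 * (1 - qq)^2) * 2)"
    unfolding B_def by (simp add: algebra_simps power2_eq_square)
  hence key: "c 1 * (1 + qq) = 2 * c 2" using PB A1 \<open>A \<noteq> 0\<close> by simp
  have m1: "m - 1 = Suc j" "m - 2 = j" using mj by simp_all
  have pr: "(\<Prod>i=0..Suc j. 1 + qq ^ (m - i)) = (\<Prod>i=0..j. 1 + qq ^ (m - i)) * (1 + qq)"
    using mj by simp
  have nz: "(\<Prod>i=0..j. 1 + qq ^ (m - i)) \<noteq> 0"
    using one_plus_qh_nz by (simp add: qq_def power_mult[symmetric])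
  have "1 + qq \<noteq> 0" using one_plus_qh_nz[of 2] by (simp add: qq_def)
  define PP where "PP = (\<Prod>i=0..j. 1 + qq ^ (m - i))"
  have "evp (G (m - 1)) qq / (PP * (1 + qq)) * (1 + qq) = 2 * (evp (G (m - 2)) qq / PP)"
    using key unfolding c_def m1 pr PP_def by simp
  hence "evp (G (m - 1)) qq / PP = 2 * (evp (G (m - 2)) qq / PP)"
    using \<open>1 + qq \<noteq> 0\<close> by simp
  thus ?thesis using nz unfolding PP_def by (simp add: field_simps)
qed



lemma qq_ne1': "1 - qq \<noteq> 0"
  using one_minus_qh_nz[of 2] by (simp add: qq_def)

lemma odd_case:
  assumes GZ: "is_GZ_H m H" and m2: "m \<ge> 2"
  shows "evp (H (m - 1)) qh = 2 * evp (H (m - 2)) qh"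
proof -
  obtain j where mj: "m = j + 2" using m2 by (metis add.commute le_Suc_ex)
  define A where "A = 1 / (1 - qq)"
  define d where "d k = evp (H (m - k)) qh / ((1 + qh) ^ (m - k + 1) * (\<Prod>i=0..m-k. 1 + qh ^ (2 * (m - i) - 1)))" for k
  define hom where "hom n = (-1) ^ (m + n) * evp (H (m - 1)) qh * qh ^ ((2 * m - 1) * n)
         / ((1 + qh) ^ m * (\<Prod>i=0..m-1. 1 + qh ^ (2 * (m - i) - 1)))" for n
  define D :: "rf poly" where "D = [:1, -1:]"
  define X where "X = smult (A^2) (D * [:1, -qq:])"
  define Xq where "Xq = smult (A^2) ([:1, -1/qq:] * D)"
  define S where "S = (\<Sum>k=1..m. smult (d k) ([:0,-1:] ^ (m - k) * X ^ (k - 1)))"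
  define Sq where "Sq = (\<Sum>k=1..m. smult (d k) ([:0,-1/qq:] ^ (m - k) * Xq ^ (k - 1)))"
  define F where "F = smult (1 / (1 - qh)) ([:1, -qh:] * S)"
  define Fq where "Fq = smult (1 / (1 - qh)) ([:1, -qh/qq:] * Sq)"
  have qn: "qq \<noteq> 0" "1 - qq \<noteq> 0" "qh \<noteq> 0" "1 - qh \<noteq> 0" "1 + qh \<noteq> 0"
    using qq_nz qq_ne1' qh_nz one_minus_qh_nz[of 1] one_plus_qh_nz[of 1] by simp_all
  have pX: "poly X y = A^2 * ((1 - y) * (1 - qq * y))" for y
    by (simp add: X_def D_def algebra_simps)
  have pXq: "poly Xq y = A^2 * ((1 - y / qq) * (1 - y))" for y
    by (simp add: Xq_def D_def algebra_simps add_divide_distrib[symmetric])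
  have qX: "qint n * qint (Suc n) = poly X (qq ^ n)" for n
    by (simp add: pX qint_def A_def power2_eq_square)
  have TF: "T (2 * m - 1) n = hom n + poly F (qq ^ n)" if "n \<ge> 1" for n
  proof -
    have "T (2 * m - 1) n =
       (-1) ^ (m + n) * evp (H (m - 1)) qh * qh ^ ((2 * m - 1) * n)
         / ((1 + qh) ^ m * (\<Prod>i=0..m-1. 1 + qh ^ (2 * (m - i) - 1)))
       + (1 - qh ^ (2 * n + 1)) / (1 - qh) *
         (\<Sum>k=1..m. (- (qq ^ n)) ^ (m - k) * evp (H (m - k)) qh
            * (qint n * qint (n + 1)) ^ (k - 1)
            / ((1 + qh) ^ (m - k + 1) * (\<Prod>i=0..m-k. 1 + qh ^ (2 * (m - i) - 1))))"
      using GZ that unfolding is_GZ_H_def by blast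
    also have "(\<Sum>k=1..m. (- (qq ^ n)) ^ (m - k) * evp (H (m - k)) qh
            * (qint n * qint (n + 1)) ^ (k - 1)
            / ((1 + qh) ^ (m - k + 1) * (\<Prod>i=0..m-k. 1 + qh ^ (2 * (m - i) - 1)))) = poly S (qq ^ n)"
      unfolding S_def poly_sum
      by (rule sum.cong) (simp_all add: d_def qX)
    also have "qh ^ (2 * n + 1) = qh * qq ^ n" by (simp add: qq_def power_mult)
    finally show ?thesis unfolding hom_def F_def by (simp add: algebra_simps add_divide_distrib[symmetric])
  qed
  have FqF: "poly Fq y = poly F (y / qq)" for y
  proof -
    have "poly Sq y = poly S (y / qq)"
      unfolding S_def Sq_def poly_sum
      by (rule sum.cong) (simp_all add: pX pXq qn)
    thus ?thesis unfolding F_def Fq_def by simp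
  qed
  have P0: "F + smult (qh ^ (2 * m - 1)) Fq - smult (A ^ (2 * m - 1)) (D ^ (2 * m - 1)) = 0"
  proof (rule roots_zero)
    fix n :: nat assume n2: "n \<ge> 2"
    then obtain n' where nn: "n = Suc n'" and n1: "n' \<ge> 1" by (metis Suc_le_D Suc_le_mono one_add_one plus_1_eq_Suc)
    have rec: "T (2 * m - 1) n + qh ^ (2 * m - 1) * T (2 * m - 1) n' = qint n ^ (2 * m - 1)"
      using T_rec[of "2 * m - 1" n'] nn by simp
    have hrec: "hom n + qh ^ (2 * m - 1) * hom n' = 0"
    proof -
      have e: "qh ^ ((2 * m - 1) * Suc n') = qh ^ (2 * m - 1) * qh ^ ((2 * m - 1) * n')"
        by (simp only: mult_Suc_right power_add)
      show ?thesis unfolding hom_def nn e by (simp add: algebra_simps)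
    qed
    have "poly Fq (qq ^ n) = poly F (qq ^ n')"
      using FqF nn qn by simp
    moreover have "qint n ^ (2 * m - 1) = A ^ (2 * m - 1) * (1 - qq ^ n) ^ (2 * m - 1)"
      by (simp add: qint_def A_def power_divide)
    ultimately show "poly (F + smult (qh ^ (2 * m - 1)) Fq - smult (A ^ (2 * m - 1)) (D ^ (2 * m - 1))) (qq ^ n) = 0"
      using rec hrec TF[OF n1] TF[of n] n2 by (simp add: D_def algebra_simps)
  qed
  have E: "F + smult (qh ^ (2 * m - 1)) Fq = smult (A ^ (2 * m - 1)) (D ^ (2 * m - 1))"
    using P0 by simp
  define S12 where "S12 = smult (d 1) ([:0,-1:] ^ (m - 1)) + smult (d 2) ([:0,-1:] ^ (m - 2) * X)"
  define S3 where "S3 = (\<Sum>k=3..m. smult (d k) ([:0,-1:] ^ (m - k) * X ^ (k - 1)))"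
  define Sq12 where "Sq12 = smult (d 1) ([:0,-1/qq:] ^ (m - 1)) + smult (d 2) ([:0,-1/qq:] ^ (m - 2) * Xq)"
  define Sq3 where "Sq3 = (\<Sum>k=3..m. smult (d k) ([:0,-1/qq:] ^ (m - k) * Xq ^ (k - 1)))"
  have I: "{1..m} = insert 1 (insert 2 {3..m})" using m2 by auto
  have SS: "S = S12 + S3" unfolding S_def S12_def S3_def I by simp
  have SqS: "Sq = Sq12 + Sq3" unfolding Sq_def Sq12_def Sq3_def I by simp
  have DX: "D dvd X" "D dvd Xq" unfolding X_def Xq_def by (rule dvd_smult, simp del: mult_pCons_left mult_pCons_right)+
  have gen: "D ^ 2 dvd (\<Sum>k=3..m. smult (d k) (W ^ (m - k) * Y ^ (k - 1)))" if DY: "D dvd Y" for W Y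
  proof (rule dvd_sum)
    fix k assume "k \<in> {3..m}"
    hence "2 \<le> k - 1" by auto
    then obtain r where kr: "k - 1 = 2 + r" using le_Suc_ex by blast
    have "D ^ 2 dvd Y ^ (k - 1)" using DY unfolding kr power_add by (simp add: dvd_power_same dvd_mult2)
    thus "D ^ 2 dvd smult (d k) (W ^ (m - k) * Y ^ (k - 1))" by (simp add: dvd_smult dvd_mult)
  qed
  have DS3: "D ^ 2 dvd S3" "D ^ 2 dvd Sq3" unfolding S3_def Sq3_def using gen DX by blast+
  define F12 where "F12 = smult (1 / (1 - qh)) ([:1, -qh:] * S12)"
  define Fq12 where "Fq12 = smult (1 / (1 - qh)) ([:1, -qh/qq:] * Sq12)"
  have DR: "D ^ 2 dvd smult (A ^ (2 * m - 1)) (D ^ (2 * m - 1))"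
  proof -
    have "2 \<le> 2 * m - 1" using m2 by simp
    thus ?thesis by (intro dvd_smult le_imp_power_dvd)
  qed
  have D12: "D ^ 2 dvd F12 + smult (qh ^ (2 * m - 1)) Fq12"
  proof -
    have "F12 + smult (qh ^ (2 * m - 1)) Fq12 = smult (A ^ (2 * m - 1)) (D ^ (2 * m - 1))
        - smult (1 / (1 - qh)) ([:1, -qh:] * S3) - smult (qh ^ (2 * m - 1)) (smult (1 / (1 - qh)) ([:1, -qh/qq:] * Sq3))"
    proof -
      have gg: "\<And>x a y b r::rf poly. (x + a) + (y + b) = r \<Longrightarrow> x + y = r - a - b"
        by (simp add: algebra_simps)
      have FS': "F = F12 + smult (1 / (1 - qh)) ([:1, -qh:] * S3)"
        unfolding F_def F12_def SS by (simp only: distrib_left smult_add_right)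
      have FqS': "smult (qh ^ (2 * m - 1)) Fq = smult (qh ^ (2 * m - 1)) Fq12 + smult (qh ^ (2 * m - 1)) (smult (1 / (1 - qh)) ([:1, -qh/qq:] * Sq3))"
        unfolding Fq_def Fq12_def SqS by (simp only: distrib_left smult_add_right)
      show ?thesis using E unfolding FS' FqS' by (rule gg)
    qed
    thus ?thesis by (simp only:) (intro dvd_diff dvd_smult dvd_mult DR DS3)
  qed
  define B where "B = smult ((-1) ^ m / (1 - qh)) (smult (- (d 1) * (1 + qh)) [:0,1:]
      + smult (d 2 * A^2) ([:1,-qh:] * [:1,-qq:] + [:qh,-1:] * [:qq,-1:]))"
  have KE: "F12 + smult (qh ^ (2 * m - 1)) Fq12 = D * ([:0,1:] ^ j * B)"
  proof (rule poly_ext)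
    fix y
    have p0: "qq ^ k * (- y / qq) ^ k = (- y) ^ k" for k
    proof -
      have "qq ^ k * (- y / qq) ^ k = (qq * (- y / qq)) ^ k" by (rule power_mult_distrib[symmetric])
      thus ?thesis using qn by simp
    qed
    have ee: "2 * m - 1 = 1 + 2 * (j + 1)" using mj by simp
    have e1: "qh ^ (2 * m - 1) = qh * qq ^ (j + 1)" unfolding ee qq_def
      by (simp only: power_add power_mult power_one_right)
    have e2: "qh ^ (2 * m - 1) = qh * qq * qq ^ j" unfolding e1 by simp
    have p1: "qh ^ (2 * m - 1) * (- y / qq) ^ (j + 1) = qh * (- y) ^ (j + 1)"
    proof -
      have "qh ^ (2 * m - 1) * (- y / qq) ^ (j + 1) = qh * (qq ^ (j + 1) * (- y / qq) ^ (j + 1))"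
        unfolding e1 by (simp only: mult.assoc)
      thus ?thesis by (simp only: p0)
    qed
    have p2: "qh ^ (2 * m - 1) * (- y / qq) ^ j = qh * qq * (- y) ^ j"
    proof -
      have "qh ^ (2 * m - 1) * (- y / qq) ^ j = qh * qq * (qq ^ j * (- y / qq) ^ j)"
        unfolding e2 by (simp only: mult.assoc)
      thus ?thesis by (simp only: p0)
    qed
    have p3: "qq * (1 - y / qq) = qq - y" using qn by (simp add: right_diff_distrib)
    have "qh * (qh * y / qq) = y" using qn(3) by (simp add: qq_def power2_eq_square)
    hence p4: "qh * (1 - qh * y / qq) = qh - y" by (simp add: right_diff_distrib)
    define Y where "Y = (- y) ^ j"
    define W where "W = 1 / (1 - qh)"
    have mm: "m - 1 = j + 1" "m - 2 = j" using mj by simp_all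
    have a1: "poly F12 y = W * (1 - qh * y) * (d 1 * (- y * Y) + d 2 * (Y * poly X y))"
      unfolding F12_def S12_def mm W_def[symmetric] Y_def by (simp add: algebra_simps)
    define Z where "Z = poly [:0,-1/qq:] y"
    define V where "V = poly [:1, -qh/qq:] y"
    have Zeq: "Z = - y / qq" unfolding Z_def by simp
    have Veq: "V = 1 - qh * y / qq" unfolding V_def by simp
    have a2': "poly Fq12 y = 1 / (1 - qh) * (V * (d 1 * Z ^ (j + 1) + d 2 * (Z ^ j * poly Xq y)))"
      unfolding Fq12_def Sq12_def mm Z_def V_def by (simp only: poly_smult poly_mult poly_add poly_power)
    have a2: "poly Fq12 y = W * (1 - qh * y / qq) * (d 1 * (- y / qq) ^ (j + 1) + d 2 * ((- y / qq) ^ j * poly Xq y))"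
      unfolding a2' W_def[symmetric] Zeq[symmetric] Veq[symmetric] by (simp only: mult.assoc)
    have a3: "qh ^ (2 * m - 1) * poly Fq12 y = W * (qh * (1 - qh * y / qq)) * (d 1 * (- y * Y))
       + W * d 2 * Y * ((1 - qh * y / qq) * qh * qq * poly Xq y)"
    proof -
      have "qh ^ (2 * m - 1) * poly Fq12 y = W * (1 - qh * y / qq) * (d 1 * (qh ^ (2 * m - 1) * (- y / qq) ^ (j + 1))
         + d 2 * ((qh ^ (2 * m - 1) * (- y / qq) ^ j) * poly Xq y))"
        unfolding a2 by (simp only: algebra_simps)
      also have "\<dots> = W * (1 - qh * y / qq) * (d 1 * (qh * (- y * Y)) + d 2 * ((qh * qq * Y) * poly Xq y))"
        unfolding p1 p2 Y_def by simp
      finally show ?thesis by (simp only: algebra_simps)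
    qed
    have p5: "(1 - qh * y / qq) * qh * qq * poly Xq y = A^2 * ((qh - y) * (qq - y)) * (1 - y)"
    proof -
      have "(1 - qh * y / qq) * qh * qq * poly Xq y = A^2 * ((qh * (1 - qh * y / qq)) * (qq * (1 - y / qq))) * (1 - y)"
        unfolding pXq by (simp only: ac_simps)
      thus ?thesis unfolding p3 p4 .
    qed
    have "poly (F12 + smult (qh ^ (2 * m - 1)) Fq12) y = poly F12 y + qh ^ (2 * m - 1) * poly Fq12 y"
      by simp
    also have "\<dots> = W * (1 - qh*y) * (d 1 * (- y * Y) + d 2 * (Y * (A^2 * ((1 - y) * (1 - qq * y)))))
        + W * (qh - y) * (d 1 * (- y * Y))
        + W * d 2 * Y * A^2 * ((qh - y) * (qq - y)) * (1 - y)"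
      unfolding a1 a3 p4 p5 pX by (simp only: ac_simps)
    also have "\<dots> = Y * (1 - y) * W * (- d 1 * (1 + qh) * y
         + d 2 * A^2 * ((1 - qh * y) * (1 - qq * y) + (qh - y) * (qq - y)))"
      by (simp add: algebra_simps)
    also have "\<dots> = poly (D * ([:0,1:] ^ j * B)) y"
    proof -
      have b0: "poly (smult (- (d 1) * (1 + qh)) [:0,1:]
           + smult (d 2 * A^2) ([:1,-qh:] * [:1,-qq:] + [:qh,-1:] * [:qq,-1:])) y
          = - d 1 * (1 + qh) * y + d 2 * A^2 * ((1 - qh * y) * (1 - qq * y) + (qh - y) * (qq - y))"
        by (simp add: algebra_simps)
      have b1: "poly B y = (-1) ^ m * W * (- d 1 * (1 + qh) * y
         + d 2 * A^2 * ((1 - qh * y) * (1 - qq * y) + (qh - y) * (qq - y)))"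
        unfolding B_def poly_smult b0 W_def by simp
      have b2: "(-1::rf) ^ m = (-1) ^ j" using mj by simp
      have b3: "Y = (-1) ^ j * y ^ j" unfolding Y_def by (rule power_minus)
      have b4: "poly D y = 1 - y" unfolding D_def by simp
      have px: "poly [:0,1:] y = y" by simp
      have "poly (D * ([:0,1:] ^ j * B)) y = poly D y * (y ^ j * poly B y)"
        by (simp only: poly_mult poly_power px)
      thus ?thesis unfolding b1 b2 b3 b4 by (simp only: ac_simps)
    qed
    finally show "poly (F12 + smult (qh ^ (2 * m - 1)) Fq12) y = poly (D * ([:0,1:] ^ j * B)) y" .
  qed
  have "D * D dvd D * ([:0,1:] ^ j * B)"
    using D12 unfolding KE by (simp add: power2_eq_square)
  moreover have "D \<noteq> 0" by (simp add: D_def)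
  ultimately have "D dvd [:0,1:] ^ j * B" by simp
  then obtain r where "[:0,1:] ^ j * B = D * r" by (elim dvdE)
  hence "poly ([:0,1:] ^ j * B) 1 = poly (D * r) 1" by simp
  hence PB: "poly B 1 = 0" by (simp add: D_def)
  have q1: "1 - qq = (1 - qh) * (1 + qh)" by (simp add: qq_def power2_eq_square algebra_simps)
  have A1: "A^2 * ((1 - qh) * (1 - qq)) = 1 / (1 + qh)"
  proof -
    have a: "A * (1 - qq) = 1" using qn(2) unfolding A_def by simp
    have "A^2 * ((1 - qh) * (1 - qq)) = (1 - qh) * A * (A * (1 - qq))" by (simp add: power2_eq_square ac_simps)
    also have "\<dots> = (1 - qh) / ((1 - qh) * (1 + qh))" unfolding a A_def q1 by simp
    also have "\<dots> = 1 / (1 + qh)" using qn(4) by simp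
    finally show ?thesis .
  qed
  have b1: "poly (smult (- (d 1) * (1 + qh)) [:0,1:]
           + smult (d 2 * A^2) ([:1,-qh:] * [:1,-qq:] + [:qh,-1:] * [:qq,-1:])) 1
          = - d 1 * (1 + qh) + d 2 * (A^2 * ((1 - qh) * (1 - qq))) * 2"
    by (simp add: algebra_simps)
  have "poly B 1 = (-1) ^ m / (1 - qh) * (- d 1 * (1 + qh) + d 2 * (A^2 * ((1 - qh) * (1 - qq))) * 2)"
    unfolding B_def poly_smult b1 ..
  hence "- d 1 * (1 + qh) + d 2 * (1 / (1 + qh)) * 2 = 0" using PB qn unfolding A1 by simp
  hence key: "d 1 * (1 + qh)^2 = 2 * d 2" using qn by (simp add: field_simps power2_eq_square)
  have m1: "m - 1 = Suc j" "m - 2 = j" using mj by simp_all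
  have pr: "(\<Prod>i=0..Suc j. 1 + qh ^ (2 * (m - i) - 1)) = (\<Prod>i=0..j. 1 + qh ^ (2 * (m - i) - 1)) * (1 + qh)"
    using mj by simp
  define PP where "PP = (1 + qh) ^ (j + 1) * (\<Prod>i=0..j. 1 + qh ^ (2 * (m - i) - 1))"
  have nz: "PP \<noteq> 0"
    using one_plus_qh_nz qn unfolding PP_def by simp
  have den: "(1 + qh) ^ (Suc j + 1) * (\<Prod>i=0..Suc j. 1 + qh ^ (2 * (m - i) - 1)) = PP * (1 + qh)^2"
    unfolding pr PP_def by (simp add: power2_eq_square algebra_simps)
  have den2: "(1 + qh) ^ (j + 1) * (\<Prod>i=0..j. 1 + qh ^ (2 * (m - i) - 1)) = PP"
    unfolding PP_def ..
  have d1: "d 1 = evp (H (Suc j)) qh / (PP * (1 + qh)^2)"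
    unfolding d_def m1 den ..
  have d2: "d 2 = evp (H j) qh / PP"
    unfolding d_def m1 den2 ..
  have "evp (H (m - 1)) qh / (PP * (1 + qh)^2) * (1 + qh)^2 = 2 * (evp (H (m - 2)) qh / PP)"
    using key unfolding d1 d2 m1 by (simp only: ac_simps)
  hence "evp (H (m - 1)) qh / PP = 2 * (evp (H (m - 2)) qh / PP)"
    using qn by simp
  thus ?thesis using nz by (simp add: field_simps)
qed


theorem corollary3p9:
  fixes m :: nat
  assumes "m \<ge> 2"
  shows "(\<forall>G. is_GZ_G m G \<longrightarrow> G (m - 1) = 2 * G (m - 2))
       \<and> (\<forall>H. is_GZ_H m H \<longrightarrow> H (m - 1) = 2 * H (m - 2))"
  using even_case[OF _ assms] odd_case[OF _ assms] evp_qq_2 evp_qh_2 by blast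

end
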